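(* Let $(X,\tau_X)$ be a locally compact space and $(Y,\mathcal{V})$ a Hausdorff uniform space. Equip $\mathcal{C}(X,Y)$, the set of continuous point-compact multifunctions from $X$ to $Y$, with the topology of uniform convergence $\tau_{uc}$. A subfamily $\mathcal{F}\subset\mathcal{C}(X,Y)$ is relatively $\tau_{uc}$-compact if and only if (AA1) $\mathcal{F}$ is pointwise relatively compact and equicontinuous, and (AA2) $\mathcal{F}$ satisfies the finite extension property.
   Context: A multifunction $f:X\to Y$ assigns to each $x$ a nonempty $f(x)\subset Y$; it is point-compact if each $f(x)$ is compact. For $V\subset Y\times Y$, $V[a]=\{w:(a,w)\in V\}$, $V[A]=\bigcup_{a\in A}V[a]$, $f(A)=\bigcup_{a\in A}f(a)$; entourages are taken symmetric. $f$ is upper semi-continuous if for each $x$ and open $W\supset f(x)$ there is an open $U_x\ni x$ with $f(U_x)\subset W$; lower semi-continuous if for each $x$ and open $W$ with $f(x)\cap W\neq\emptyset$ there is an open $U_x\ni x$ with $f(u)\cap W\neq\emptyset$ for all $u\in U_x$; continuous if both. For $V\in\mathcal{V}$ let $$V^{\dagger}=\{(f,g):\ \forall x\in X\ \forall y\in f(x)\ \forall z\in g(x):\ (\{y\}\times g(x))\cap V\neq\emptyset,\ (f(x)\times\{z\})\cap V\neq\emptyset\};$$ the sets $V^\dagger$ form a base of the uniformity of uniform convergence, which induces $\tau_{uc}$. The uniformity of pointwise convergence $\mathcal{W}_{pc}$ on $\mathcal{F}$ has subbase the sets defined like $V^\dagger$ but with the quantifier over $x$ replaced by a single fixed $x\in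 X$ (for $x\in X$, $V\in\mathcal{V}$). $\mathcal{F}$ is pointwise relatively compact if $\bigcup\{f(x):f\in\mathcal{F}\}$ is relatively compact in $Y$ for every $x\in X$. $\mathcal{F}$ is equicontinuous if for every $x\in X$ and $V\in\mathcal{V}$ there is an open $U_x\ni x$ such that for all $f\in\mathcal{F}$: $f(U_x)\subset V[f(x)]$, and $f(u)\cap V[y]\neq\emptyset$ for all $u\in U_x$, $y\in f(x)$. $\mathcal{F}$ satisfies the finite extension property if for every $V\in\mathcal{V}$ there is $W\in\mathcal{W}_{pc}$ (on $\mathcal{F}$) with $W\subset V^\dagger\cap(\mathcal{F}\times\mathcal{F})$. Relatively $\tau_{uc}$-compact means the $\tau_{uc}$-closure of $\mathcal{F}$ in $\mathcal{C}(X,Y)$ is compact. *)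

theory Defs
  imports "HOL-Analysis.Analysis"
begin

text \<open>Multifunctions from X (a topological type) to Y (a uniform type) are
  functions of type 'a => 'b set.  Entourages are taken symmetric.\<close>

definition entourage :: "('b::uniform_space \<times> 'b) set \<Rightarrow> bool" where
  "entourage V \<longleftrightarrow> (\<forall>\<^sub>F p in uniformity. p \<in> V) \<and> (\<forall>a b. (a, b) \<in> V \<longrightarrow> (b, a) \<in> V)"

definition usc :: "('a::topological_space \<Rightarrow> 'b::topological_space set) \<Rightarrow> bool" where
  "usc f \<longleftrightarrow> (\<forall>x W. open W \<and> f x \<subseteq> W \<longrightarrow>
      (\<exists>U. open U \<and> x \<in> U \<and> (\<forall>u\<in>U. f u \<subseteq> W)))"

definition lsc :: "('a::topological_space \<Rightarrow> 'b::topological_space set) \<Rightarrow> bool" where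
  "lsc f \<longleftrightarrow> (\<forall>x W. open W \<and> f x \<inter> W \<noteq> {} \<longrightarrow>
      (\<exists>U. open U \<and> x \<in> U \<and> (\<forall>u\<in>U. f u \<inter> W \<noteq> {})))"

definition mcont :: "('a::topological_space \<Rightarrow> 'b::topological_space set) set" where
  "mcont = {f. (\<forall>x. f x \<noteq> {} \<and> compact (f x)) \<and> usc f \<and> lsc f}"

text \<open>The relation at a single point x (subbase of the pointwise uniformity).\<close>
definition pdagger :: "'a \<Rightarrow> ('b \<times> 'b) set \<Rightarrow> (('a \<Rightarrow> 'b set) \<times> ('a \<Rightarrow> 'b set)) set" where
  "pdagger x V = {(f, g). \<forall>y\<in>f x. \<forall>z\<in>g x.
      ({y} \<times> g x) \<inter> V \<noteq> {} \<and> (f x \<times> {z}) \<inter> V \<noteq> {}}"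

text \<open>V-dagger: base of the uniformity of uniform convergence.\<close>
definition udagger :: "('b \<times> 'b) set \<Rightarrow> (('a \<Rightarrow> 'b set) \<times> ('a \<Rightarrow> 'b set)) set" where
  "udagger V = {(f, g). \<forall>x. \<forall>y\<in>f x. \<forall>z\<in>g x.
      ({y} \<times> g x) \<inter> V \<noteq> {} \<and> (f x \<times> {z}) \<inter> V \<noteq> {}}"

lemma udagger_mono: "V \<subseteq> W \<Longrightarrow> udagger V \<subseteq> udagger W"
  unfolding udagger_def by blast

lemma entourage_Int: "entourage V \<Longrightarrow> entourage W \<Longrightarrow> entourage (V \<inter> W)"
  unfolding entourage_def by (auto intro: eventually_conj)

lemma entourage_UNIV: "entourage UNIV"
  unfolding entourage_def by auto

definition uc_open :: "('a::topological_space \<Rightarrow> 'b::uniform_space set) set \<Rightarrow> bool" where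
  "uc_open U \<longleftrightarrow> U \<subseteq> mcont \<and>
     (\<forall>f\<in>U. \<exists>V. entourage V \<and> {g\<in>mcont. (f, g) \<in> udagger V} \<subseteq> U)"

lemma istopology_uc_open: "istopology uc_open"
  unfolding istopology_def
proof safe
  fix S T :: "('a \<Rightarrow> 'b set) set"
  assume S: "uc_open S" and T: "uc_open T"
  show "uc_open (S \<inter> T)"
    unfolding uc_open_def
  proof safe
    show "x \<in> mcont" if "x \<in> S" for x using S that unfolding uc_open_def by blast
  next
    fix f assume f: "f \<in> S" "f \<in> T"
    obtain V1 where V1: "entourage V1" "{g\<in>mcont. (f, g) \<in> udagger V1} \<subseteq> S"
      using S f unfolding uc_open_def by blast
    obtain V2 where V2: "entourage V2" "{g\<in>mcont. (f, g) \<in> udagger V2} \<subseteq> T"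
      using T f unfolding uc_open_def by blast
    have "{g\<in>mcont. (f, g) \<in> udagger (V1 \<inter> V2)} \<subseteq> S \<inter> T"
      using V1(2) V2(2) udagger_mono[of "V1 \<inter> V2" V1] udagger_mono[of "V1 \<inter> V2" V2] by blast
    then show "\<exists>V. entourage V \<and> {g\<in>mcont. (f, g) \<in> udagger V} \<subseteq> S \<inter> T"
      using entourage_Int[OF V1(1) V2(1)] by blast
  qed
next
  fix K :: "('a \<Rightarrow> 'b set) set set"
  assume K: "\<forall>S\<in>K. uc_open S"
  show "uc_open (\<Union>K)"
    unfolding uc_open_def
  proof safe
    fix f S assume "f \<in> S" "S \<in> K"
    then show "f \<in> mcont" using K unfolding uc_open_def by blast
  next
    fix f S assume fS: "f \<in> S" "S \<in> K"
    then obtain V where "entourage V" "{g\<in>mcont. (f, g) \<in> udagger V} \<subseteq> S"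
      using K unfolding uc_open_def by blast
    then show "\<exists>V. entourage V \<and> {g\<in>mcont. (f, g) \<in> udagger V} \<subseteq> \<Union>K"
      using fS by blast
  qed
qed

definition tau_uc :: "('a::topological_space \<Rightarrow> 'b::uniform_space set) topology" where
  "tau_uc = topology uc_open"

definition pointwise_relcompact :: "('a \<Rightarrow> 'b::topological_space set) set \<Rightarrow> bool" where
  "pointwise_relcompact F \<longleftrightarrow> (\<forall>x. compact (closure (\<Union>f\<in>F. f x)))"

definition equicontinuous :: "('a::topological_space \<Rightarrow> 'b::uniform_space set) set \<Rightarrow> bool" where
  "equicontinuous F \<longleftrightarrow> (\<forall>x V. entourage V \<longrightarrow>
     (\<exists>U. open U \<and> x \<in> U \<and> (\<forall>f\<in>F.
        (\<forall>u\<in>U. f u \<subseteq> V `` f x) \<and> (\<forall>u\<in>U. \<forall>y\<in>f x. f u \<inter> V `` {y} \<noteq> {}))))"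

text \<open>Finite extension property: every V-dagger (restricted to F x F) contains
  a member of the pointwise uniformity on F, i.e. contains a finite
  intersection of subbasic sets pdagger x W (restricted to F x F).\<close>
definition finite_extension :: "('a::topological_space \<Rightarrow> 'b::uniform_space set) set \<Rightarrow> bool" where
  "finite_extension F \<longleftrightarrow> (\<forall>V. entourage V \<longrightarrow>
     (\<exists>P. finite P \<and> (\<forall>(x, W)\<in>P. entourage W) \<and>
        {(f, g). f \<in> F \<and> g \<in> F \<and> (\<forall>(x, W)\<in>P. (f, g) \<in> pdagger x W)} \<subseteq> udagger V))"

end

theory Submission
  imports Defs
begin


definition ultra :: "'a filter \<Rightarrow> bool" where
  "ultra U \<longleftrightarrow> U \<noteq> bot \<and> (\<forall>P. eventually P U \<or> eventually (\<lambda>x. \<not> P x) U)"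

lemma ultra_exists:
  fixes F :: "'a filter"
  assumes F: "F \<noteq> bot"
  shows "\<exists>U\<le>F. ultra U"
proof -
  let ?R = "{(b, a). a \<noteq> bot \<and> a \<le> b \<and> b \<le> F}"
  have fld: "Field ?R = {G. G \<noteq> bot \<and> G \<le> F}"
    by (auto simp: Field_def bot_unique)
  have "\<exists>m\<in>Field ?R. \<forall>a\<in>Field ?R. (m, a) \<in> ?R \<longrightarrow> a = m"
  proof (rule Zorns_po_lemma)
    show "Partial_order ?R"
      by (auto simp: partial_order_on_def preorder_on_def
          antisym_def refl_on_def trans_def Field_def bot_unique)
    show "\<exists>u\<in>Field ?R. \<forall>a\<in>C. (a, u) \<in> ?R" if C: "C \<in> Chains ?R" for C
    proof (cases "C = {}")
      case True
      then show ?thesis using F fld by auto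
    next
      case False
      have ch: "\<And>a b. a \<in> C \<Longrightarrow> b \<in> C \<Longrightarrow> a \<le> b \<or> b \<le> a"
        using C unfolding Chains_def by auto
      have nb: "\<And>a. a \<in> C \<Longrightarrow> a \<noteq> bot \<and> a \<le> F"
        using C unfolding Chains_def by auto
      have "Inf C = bot \<longleftrightarrow> (\<exists>x\<in>C. x = bot)"
        unfolding trivial_limit_def
        apply (subst eventually_Inf_base[OF False])
        using ch apply (metis inf.absorb_iff1 inf.absorb_iff2 order_refl)
        by auto
      then have "Inf C \<noteq> bot" using nb by auto
      moreover obtain x where "x \<in> C" using False by auto
      then have "Inf C \<le> F" using nb by (meson Inf_lower order_trans)
      ultimately show ?thesis
        using nb by (intro bexI[of _ "Inf C"]) (auto simp: fld intro: Inf_lower)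
    qed
  qed
  then obtain M where M: "M \<noteq> bot" "M \<le> F"
    and max: "\<And>G. G \<noteq> bot \<Longrightarrow> G \<le> M \<Longrightarrow> G = M"
    unfolding fld by auto
  have "ultra M"
    unfolding ultra_def
  proof (intro conjI allI M(1))
    fix P
    show "eventually P M \<or> eventually (\<lambda>x. \<not> P x) M"
    proof (rule disjCI)
      assume "\<not> eventually (\<lambda>x. \<not> P x) M"
      then have "inf M (principal {x. P x}) \<noteq> bot"
        by (simp add: trivial_limit_def eventually_inf_principal)
      then have "inf M (principal {x. P x}) = M"
        by (rule max) simp
      moreover have "eventually P (inf M (principal {x. P x}))"
        by (simp add: eventually_inf_principal)
      ultimately show "eventually P M" by simp
    qed
  qed
  then show ?thesis using M by auto
qed



lemma ent_ev: "entourage V \<Longrightarrow> eventually (\<lambda>p. p \<in> V) uniformity"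
  unfolding entourage_def by auto

lemma ent_refl: "entourage (V::('b::uniform_space \<times> 'b) set) \<Longrightarrow> (y, y) \<in> V"
  using uniformity_refl[OF ent_ev] by auto

lemma ent_sym: "entourage V \<Longrightarrow> (a, b) \<in> V \<Longrightarrow> (b, a) \<in> V"
  unfolding entourage_def by auto

lemma ent_symI:
  fixes E :: "('b::uniform_space \<times> 'b) \<Rightarrow> bool"
  assumes "eventually E uniformity"
  shows "entourage {p. E p \<and> E (snd p, fst p)}"
proof -
  have "eventually (\<lambda>p. E p \<and> E (snd p, fst p)) uniformity"
    using eventually_conj[OF assms uniformity_sym[OF assms]]
    by (rule eventually_mono) (auto simp: case_prod_beta)
  then show ?thesis unfolding entourage_def by auto
qed

lemma ent_split:
  fixes V :: "('b::uniform_space \<times> 'b) set"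
  assumes "entourage V"
  shows "\<exists>W. entourage W \<and> W O W \<subseteq> V"
proof -
  obtain D where D: "eventually D uniformity" "\<And>x y z. D (x, y) \<Longrightarrow> D (y, z) \<Longrightarrow> (x, z) \<in> V"
    using uniformity_transE[OF ent_ev[OF assms]] by metis
  define W where "W = {p. D p \<and> D (snd p, fst p)}"
  have "W O W \<subseteq> V"
  proof
    fix q assume "q \<in> W O W"
    then obtain a b c where "q = (a, c)" "(a, b) \<in> W" "(b, c) \<in> W" by blast
    then show "q \<in> V" using D(2)[of a b c] unfolding W_def by simp
  qed
  then show ?thesis using ent_symI[OF D(1)] unfolding W_def by blast
qed

lemma ent_Inter:
  fixes P :: "('b::uniform_space \<times> 'b) set set"
  shows "finite P \<Longrightarrow> (\<forall>W\<in>P. entourage W) \<Longrightarrow> entourage (\<Inter>P)"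
  by (induction P rule: finite_induct) (auto intro: entourage_Int entourage_UNIV)

lemma ent_open_nbhd:
  fixes O' :: "'b::uniform_space set"
  assumes "open O'" "y \<in> O'"
  shows "\<exists>W. entourage W \<and> W `` {y} \<subseteq> O'"
proof -
  have ev: "eventually (\<lambda>(x', z). x' = y \<longrightarrow> z \<in> O') uniformity"
    using assms open_uniformity by blast
  define E where "E = (\<lambda>(x', z). x' = y \<longrightarrow> z \<in> O')"
  have "entourage {p. E p \<and> E (snd p, fst p)}" using ent_symI[OF ev[folded E_def]] .
  moreover have "{p. E p \<and> E (snd p, fst p)} `` {y} \<subseteq> O'" unfolding E_def by auto
  ultimately show ?thesis by blast
qed

lemma ent_interior:
  fixes W :: "('b::uniform_space \<times> 'b) set"
  assumes "entourage W"
  shows "\<exists>O'. open O' \<and> y \<in> O' \<and> O' \<subseteq> W `` {y}"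
proof -
  define O' where "O' = {z. \<exists>W2. entourage W2 \<and> W2 `` {z} \<subseteq> W `` {y}}"
  have "open O'"
    unfolding open_uniformity
  proof
    fix z assume "z \<in> O'"
    then obtain W2 where W2: "entourage W2" "W2 `` {z} \<subseteq> W `` {y}" unfolding O'_def by auto
    obtain W3 where W3: "entourage W3" "W3 O W3 \<subseteq> W2" using ent_split[OF W2(1)] by auto
    show "eventually (\<lambda>(x', z'). x' = z \<longrightarrow> z' \<in> O') uniformity"
    proof (rule eventually_mono[OF ent_ev[OF W3(1)]])
      fix p :: "'b \<times> 'b" assume p: "p \<in> W3"
      show "(\<lambda>(x', z'). x' = z \<longrightarrow> z' \<in> O') p"
      proof (cases p)
        case (Pair a b)
        have "W3 `` {b} \<subseteq> W `` {y}" if "a = z"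
          using W3(2) W2(2) p Pair that by blast
        then show ?thesis unfolding O'_def using Pair W3(1) by auto
      qed
    qed
  qed
  moreover have "y \<in> O'" unfolding O'_def using assms by auto
  moreover have "O' \<subseteq> W `` {y}" unfolding O'_def using ent_refl by blast
  ultimately show ?thesis by blast
qed

lemma ent_interior_set:
  fixes W :: "('b::uniform_space \<times> 'b) set"
  assumes "entourage W"
  shows "\<exists>O'. open O' \<and> K \<subseteq> O' \<and> O' \<subseteq> W `` K"
proof -
  have "\<forall>y. \<exists>O'. open O' \<and> y \<in> O' \<and> O' \<subseteq> W `` {y}" using ent_interior[OF assms] by blast
  then obtain Of where Of: "\<And>y. open (Of y) \<and> y \<in> Of y \<and> Of y \<subseteq> W `` {y}" by metis
  have "open (\<Union>y\<in>K. Of y)" using Of by auto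
  moreover have "K \<subseteq> (\<Union>y\<in>K. Of y)" using Of by auto
  moreover have "(\<Union>y\<in>K. Of y) \<subseteq> W `` K"
  proof
    fix z assume "z \<in> (\<Union>y\<in>K. Of y)"
    then obtain y where "y \<in> K" "z \<in> Of y" by auto
    then have "z \<in> W `` {y}" using Of by blast
    then show "z \<in> W `` K" using \<open>y \<in> K\<close> by auto
  qed
  ultimately show ?thesis by blast
qed

lemma compact_ent_cover:
  fixes K :: "'b::uniform_space set"
  assumes "compact K" "entourage W"
  shows "\<exists>T. finite T \<and> T \<subseteq> K \<and> K \<subseteq> W `` T"
proof -
  have "\<forall>y. \<exists>O'. open O' \<and> y \<in> O' \<and> O' \<subseteq> W `` {y}" using ent_interior[OF assms(2)] by blast
  then obtain Of where Of: "\<And>y. open (Of y) \<and> y \<in> Of y \<and> Of y \<subseteq> W `` {y}" by metis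
  have "K \<subseteq> (\<Union>k\<in>K. Of k)" using Of by blast
  then obtain T where "T \<subseteq> K" "finite T" "K \<subseteq> (\<Union>k\<in>T. Of k)"
    using compactE_image[OF assms(1), of K Of] Of by metis
  moreover have "(\<Union>k\<in>T. Of k) \<subseteq> W `` T"
  proof
    fix z assume "z \<in> (\<Union>k\<in>T. Of k)"
    then obtain y where "y \<in> T" "z \<in> Of y" by auto
    then have "z \<in> W `` {y}" using Of by blast
    then show "z \<in> W `` T" using \<open>y \<in> T\<close> by auto
  qed
  ultimately show ?thesis by blast
qed

lemma compact_in_open_ent:
  fixes K :: "'b::uniform_space set"
  assumes "compact K" "open O'" "K \<subseteq> O'"
  shows "\<exists>W. entourage W \<and> W `` K \<subseteq> O'"
proof -
  have "\<forall>k\<in>K. \<exists>W. entourage W \<and> W `` {k} \<subseteq> O'" using ent_open_nbhd assms by blast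
  then obtain Wf where Wf: "\<And>k. k \<in> K \<Longrightarrow> entourage (Wf k) \<and> Wf k `` {k} \<subseteq> O'" by metis
  have "\<forall>k\<in>K. \<exists>W. entourage W \<and> W O W \<subseteq> Wf k" using ent_split Wf by blast
  then obtain Hf where Hf: "\<And>k. k \<in> K \<Longrightarrow> entourage (Hf k) \<and> Hf k O Hf k \<subseteq> Wf k" by metis
  have "\<forall>k. \<exists>O'. open O' \<and> k \<in> O' \<and> O' \<subseteq> (if k \<in> K then Hf k else UNIV) `` {k}"
  proof
    fix k
    have "entourage (if k \<in> K then Hf k else UNIV)" using Hf entourage_UNIV by auto
    then show "\<exists>O'. open O' \<and> k \<in> O' \<and> O' \<subseteq> (if k \<in> K then Hf k else UNIV) `` {k}"
      using ent_interior by blast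
  qed
  then obtain Of where Of: "\<And>k. open (Of k) \<and> k \<in> Of k \<and> Of k \<subseteq> (if k \<in> K then Hf k else UNIV) `` {k}"
    by metis
  have "K \<subseteq> (\<Union>k\<in>K. Of k)" using Of by blast
  then obtain T where T: "T \<subseteq> K" "finite T" "K \<subseteq> (\<Union>k\<in>T. Of k)"
    using compactE_image[OF assms(1), of K Of] Of by metis
  define W where "W = \<Inter>(Hf ` T)"
  have "entourage W" unfolding W_def using T Hf by (intro ent_Inter) auto
  moreover have "W `` K \<subseteq> O'"
  proof
    fix z assume "z \<in> W `` K"
    then obtain y where y: "y \<in> K" "(y, z) \<in> W" by auto
    then obtain k where k: "k \<in> T" "y \<in> Of k" using T by auto
    then have "k \<in> K" using T by auto
    then have "y \<in> Hf k `` {k}" using Of[of k] k by auto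
    then have "(k, y) \<in> Hf k" by auto
    moreover have "(y, z) \<in> Hf k" using y k unfolding W_def by auto
    ultimately have "(k, z) \<in> Wf k" using Hf k T by blast
    then show "z \<in> O'" using Wf k T by blast
  qed
  ultimately show ?thesis by blast
qed

lemma closure_ent1:
  fixes A :: "'b::uniform_space set"
  assumes "y \<in> closure A" "entourage W"
  shows "W `` {y} \<inter> A \<noteq> {}"
proof -
  have c: "\<And>S. open S \<Longrightarrow> y \<in> S \<Longrightarrow> A \<inter> S \<noteq> {}"
    using assms(1) unfolding closure_iff_nhds_not_empty by blast
  obtain O' where "open O'" "y \<in> O'" "O' \<subseteq> W `` {y}" using ent_interior[OF assms(2)] by blast
  then show ?thesis using c[of O'] by blast
qed

lemma closure_ent2:
  fixes A :: "'b::uniform_space set"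
  assumes a: "\<And>W. entourage W \<Longrightarrow> W `` {y} \<inter> A \<noteq> {}"
  shows "y \<in> closure A"
  unfolding closure_iff_nhds_not_empty
proof (intro allI impI)
  fix B S assume SB: "S \<subseteq> B" "open S" "y \<in> S"
  then obtain W where W: "entourage W" "W `` {y} \<subseteq> S" using ent_open_nbhd by blast
  then have "W `` {y} \<inter> A \<noteq> {}" using a by blast
  then show "A \<inter> B \<noteq> {}" using W(2) SB(1) by blast
qed



definition hc :: "('b \<times> 'b) set \<Rightarrow> 'b set \<Rightarrow> 'b set \<Rightarrow> bool" where
  "hc V A B \<longleftrightarrow> (\<forall>y\<in>A. \<exists>z\<in>B. (y, z) \<in> V) \<and> (\<forall>z\<in>B. \<exists>y\<in>A. (y, z) \<in> V)"

lemma hc_comp: "hc V A B \<Longrightarrow> hc W B C \<Longrightarrow> hc (V O W) A C"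
  unfolding hc_def by (meson relcomp.relcompI)

lemma hc_mono: "V \<subseteq> W \<Longrightarrow> hc V A B \<Longrightarrow> hc W A B"
  unfolding hc_def by blast

lemma hc_sym: "entourage V \<Longrightarrow> hc V A B \<Longrightarrow> hc V B A"
proof -
  assume e: "entourage V" and h: "hc V A B"
  have "\<forall>y\<in>B. \<exists>z\<in>A. (y, z) \<in> V"
  proof
    fix y assume "y \<in> B"
    then obtain z where "z \<in> A" "(z, y) \<in> V" using h unfolding hc_def by blast
    then show "\<exists>z\<in>A. (y, z) \<in> V" using ent_sym[OF e] by blast
  qed
  moreover have "\<forall>z\<in>A. \<exists>y\<in>B. (y, z) \<in> V"
  proof
    fix z assume "z \<in> A"
    then obtain y where "y \<in> B" "(z, y) \<in> V" using h unfolding hc_def by blast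
    then show "\<exists>y\<in>B. (y, z) \<in> V" using ent_sym[OF e] by blast
  qed
  ultimately show ?thesis unfolding hc_def by blast
qed

lemma hc_refl: "entourage (V::('b::uniform_space \<times> 'b) set) \<Longrightarrow> hc V A A"
  unfolding hc_def using ent_refl by blast

lemma pdagger_hc: "f x \<noteq> {} \<Longrightarrow> g x \<noteq> {} \<Longrightarrow> (f, g) \<in> pdagger x V \<longleftrightarrow> hc V (f x) (g x)"
  unfolding pdagger_def hc_def by blast

lemma mcont_ne: "f \<in> mcont \<Longrightarrow> f x \<noteq> {}"
  unfolding mcont_def by auto

lemma mcont_compact: "f \<in> mcont \<Longrightarrow> compact (f x)"
  unfolding mcont_def by auto

lemma udagger_hc: "f \<in> mcont \<Longrightarrow> g \<in> mcont \<Longrightarrow> (f, g) \<in> udagger V \<longleftrightarrow> (\<forall>x. hc V (f x) (g x))"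
  using mcont_ne[of f] mcont_ne[of g] unfolding udagger_def hc_def by blast

lemma udagger_pdagger: "(f, g) \<in> udagger V \<longleftrightarrow> (\<forall>x. (f, g) \<in> pdagger x V)"
  unfolding udagger_def pdagger_def by blast

lemma openin_tau: "openin tau_uc = uc_open"
  unfolding tau_uc_def by (rule topology_inverse'[OF istopology_uc_open])

lemma uc_open_mcont: "uc_open (mcont :: ('a::topological_space \<Rightarrow> 'b::uniform_space set) set)"
  unfolding uc_open_def using entourage_UNIV by blast

lemma topspace_tau: "topspace tau_uc = mcont"
  unfolding topspace_def openin_tau using uc_open_mcont unfolding uc_open_def by blast

definition ball_uc :: "('a::topological_space \<Rightarrow> 'b::uniform_space set) \<Rightarrow> ('b \<times> 'b) set \<Rightarrow> ('a \<Rightarrow> 'b set) set" where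
  "ball_uc f V = {g \<in> mcont. (f, g) \<in> udagger V}"

lemma ball_uc_comp:
  assumes "f \<in> mcont" "g \<in> ball_uc f V" "k \<in> ball_uc g W"
  shows "k \<in> ball_uc f (V O W)"
proof -
  have "g \<in> mcont" "k \<in> mcont" using assms unfolding ball_uc_def by auto
  then have "\<forall>x. hc V (f x) (g x)" "\<forall>x. hc W (g x) (k x)"
    using assms unfolding ball_uc_def by (auto simp: udagger_hc)
  then have "\<forall>x. hc (V O W) (f x) (k x)" using hc_comp by blast
  then show ?thesis using assms(1) \<open>k \<in> mcont\<close> unfolding ball_uc_def by (simp add: udagger_hc)
qed

lemma ball_uc_self: "f \<in> mcont \<Longrightarrow> entourage V \<Longrightarrow> f \<in> ball_uc f V"
proof -
  assume "f \<in> mcont" "entourage V"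
  then have "\<forall>x. hc V (f x) (f x)" using hc_refl by blast
  then show ?thesis unfolding ball_uc_def using udagger_hc[OF \<open>f \<in> mcont\<close> \<open>f \<in> mcont\<close>] \<open>f \<in> mcont\<close> by simp
qed

lemma ball_uc_interior:
  fixes f :: "'a::topological_space \<Rightarrow> 'b::uniform_space set"
  assumes "f \<in> mcont" "entourage W"
  shows "\<exists>O'. uc_open O' \<and> f \<in> O' \<and> O' \<subseteq> ball_uc f W"
proof -
  define O' where "O' = {k\<in>mcont. \<exists>W2. entourage W2 \<and> ball_uc k W2 \<subseteq> ball_uc f W}"
  have "uc_open O'"
    unfolding uc_open_def
  proof (intro conjI ballI)
    show "O' \<subseteq> mcont" unfolding O'_def by auto
    fix k assume "k \<in> O'"
    then obtain W2 where W2: "k \<in> mcont" "entourage W2" "ball_uc k W2 \<subseteq> ball_uc f W"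
      unfolding O'_def by auto
    obtain W3 where W3: "entourage W3" "W3 O W3 \<subseteq> W2" using ent_split[OF W2(2)] by auto
    have "ball_uc k W3 \<subseteq> O'"
    proof
      fix g assume g: "g \<in> ball_uc k W3"
      have "ball_uc g W3 \<subseteq> ball_uc f W"
      proof
        fix h assume "h \<in> ball_uc g W3"
        then have "h \<in> ball_uc k (W3 O W3)" using ball_uc_comp[OF W2(1) g] by blast
        then have "h \<in> ball_uc k W2" using W3(2) udagger_mono unfolding ball_uc_def by blast
        then show "h \<in> ball_uc f W" using W2(3) by blast
      qed
      then show "g \<in> O'" using g W3(1) unfolding O'_def ball_uc_def by auto
    qed
    then show "\<exists>V. entourage V \<and> {g \<in> mcont. (k, g) \<in> udagger V} \<subseteq> O'"
      using W3(1) unfolding ball_uc_def by blast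
  qed
  moreover have "f \<in> O'" unfolding O'_def using assms by auto
  moreover have "O' \<subseteq> ball_uc f W" unfolding O'_def using ball_uc_self by blast
  ultimately show ?thesis by blast
qed

lemma closure_approx:
  fixes F :: "('a::topological_space \<Rightarrow> 'b::uniform_space set) set"
  assumes "g \<in> tau_uc closure_of F" "entourage W"
  shows "\<exists>f\<in>F. f \<in> ball_uc g W"
proof -
  have g: "g \<in> mcont" using assms(1) closure_of_subset_topspace[of tau_uc F] unfolding topspace_tau by blast
  obtain O' where "uc_open O'" "g \<in> O'" "O' \<subseteq> ball_uc g W" using ball_uc_interior[OF g assms(2)] by blast
  moreover have "\<And>T. g \<in> T \<Longrightarrow> uc_open T \<Longrightarrow> \<exists>y. y \<in> F \<and> y \<in> T"
  proof -
    fix T assume "g \<in> T" "uc_open T"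
    then show "\<exists>y. y \<in> F \<and> y \<in> T" using assms(1) unfolding in_closure_of openin_tau by blast
  qed
  ultimately obtain f where "f \<in> F" "f \<in> O'" by blast
  then show ?thesis using \<open>O' \<subseteq> ball_uc g W\<close> by blast
qed

lemma in_closure_ofI_uc:
  fixes F :: "('a::topological_space \<Rightarrow> 'b::uniform_space set) set"
  assumes "h \<in> mcont" "\<And>V. entourage V \<Longrightarrow> \<exists>f\<in>F. f \<in> ball_uc h V"
  shows "h \<in> tau_uc closure_of F"
  unfolding in_closure_of openin_tau topspace_tau
proof (intro conjI allI impI assms(1))
  fix T assume hT: "h \<in> T \<and> uc_open T"
  then obtain V where V: "entourage V" "ball_uc h V \<subseteq> T"
    unfolding uc_open_def ball_uc_def by blast
  obtain f where "f \<in> F" "f \<in> ball_uc h V" using assms(2)[OF V(1)] by blast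
  then show "\<exists>y. y \<in> F \<and> y \<in> T" using V(2) by blast
qed



lemma ent_sub_comp: "entourage (W::('b::uniform_space \<times> 'b) set) \<Longrightarrow> W \<subseteq> W O W"
proof
  fix p assume e: "entourage W" and "p \<in> W"
  then obtain a b where "p = (a, b)" "(a, b) \<in> W" by (cases p) auto
  moreover have "(a, a) \<in> W" using ent_refl[OF e] .
  ultimately show "p \<in> W O W" by blast
qed

lemma chain3: "(a, b) \<in> A \<Longrightarrow> (b, c) \<in> B \<Longrightarrow> (c, d) \<in> C \<Longrightarrow> (a, d) \<in> A O B O C"
  by blast

lemma sub3:
  fixes W :: "('b::uniform_space \<times> 'b) set"
  assumes "entourage W" "W O W \<subseteq> W1" "W1 O W1 \<subseteq> V"
  shows "W O W O W \<subseteq> V" "W O (W O W) O W \<subseteq> V"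
proof -
  have "W \<subseteq> W1" using ent_sub_comp[OF assms(1)] assms(2) by blast
  show "W O W O W \<subseteq> V"
  proof
    fix p assume "p \<in> W O W O W"
    then obtain a b c d where "p = (a, d)" "(a, b) \<in> W" "(b, c) \<in> W" "(c, d) \<in> W" by blast
    then have "(a, c) \<in> W1" "(c, d) \<in> W1" using assms(2) \<open>W \<subseteq> W1\<close> by blast+
    then show "p \<in> V" using assms(3) \<open>p = (a, d)\<close> by blast
  qed
  show "W O (W O W) O W \<subseteq> V"
  proof
    fix p assume "p \<in> W O (W O W) O W"
    then obtain a b c d e where "p = (a, e)" "(a, b) \<in> W" "(b, c) \<in> W" "(c, d) \<in> W" "(d, e) \<in> W" by blast
    then have "(a, c) \<in> W1" "(c, e) \<in> W1" using assms(2) by blast+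
    then show "p \<in> V" using assms(3) \<open>p = (a, e)\<close> by blast
  qed
qed

lemma closure_sub_mcont: "tau_uc closure_of F \<subseteq> mcont"
  using closure_of_subset_topspace[of tau_uc F] unfolding topspace_tau .

lemma F_sub_closure: "F \<subseteq> mcont \<Longrightarrow> F \<subseteq> tau_uc closure_of F"
  using closure_of_subset[of F tau_uc] unfolding topspace_tau by blast

lemma compact_net_var:
  fixes S :: "('a::topological_space \<Rightarrow> 'b::uniform_space set) set"
  assumes "compactin tau_uc S" "\<And>g. g \<in> S \<Longrightarrow> entourage (Wf g)"
  shows "\<exists>T. finite T \<and> T \<subseteq> S \<and> (\<forall>g\<in>S. \<exists>t\<in>T. g \<in> ball_uc t (Wf t))"
proof -
  have Sm: "S \<subseteq> mcont" using compactin_subset_topspace[OF assms(1)] unfolding topspace_tau .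
  have "\<forall>g\<in>S. \<exists>O'. uc_open O' \<and> g \<in> O' \<and> O' \<subseteq> ball_uc g (Wf g)"
    using ball_uc_interior Sm assms(2) by blast
  then obtain Og where Og: "\<And>g. g \<in> S \<Longrightarrow> uc_open (Og g) \<and> g \<in> Og g \<and> Og g \<subseteq> ball_uc g (Wf g)"
    by metis
  have "\<forall>U\<in>Og ` S. openin tau_uc U" using Og unfolding openin_tau by blast
  moreover have "S \<subseteq> \<Union>(Og ` S)" using Og by blast
  ultimately obtain \<F> where \<F>: "finite \<F>" "\<F> \<subseteq> Og ` S" "S \<subseteq> \<Union>\<F>"
    using assms(1) unfolding compactin_def by meson
  then obtain T where T: "T \<subseteq> S" "finite T" "\<F> = Og ` T"
    using finite_subset_image by metis
  have "\<forall>g\<in>S. \<exists>t\<in>T. g \<in> ball_uc t (Wf t)"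
  proof
    fix g assume "g \<in> S"
    then obtain t where "t \<in> T" "g \<in> Og t" using \<F>(3) T(3) by blast
    then show "\<exists>t\<in>T. g \<in> ball_uc t (Wf t)" using Og T(1) by blast
  qed
  then show ?thesis using T by blast
qed

lemma ball_hc: "t \<in> mcont \<Longrightarrow> g \<in> ball_uc t W \<Longrightarrow> hc W (t x) (g x)"
  unfolding ball_uc_def using udagger_hc by blast

lemma forward_pointwise:
  fixes F :: "('a::topological_space \<Rightarrow> 'b::{uniform_space,t2_space} set) set"
  assumes Fm: "F \<subseteq> mcont" and cpt: "compactin tau_uc (tau_uc closure_of F)"
  shows "pointwise_relcompact F"
  unfolding pointwise_relcompact_def
proof
  fix x
  define S where "S = tau_uc closure_of F"
  have Sm: "S \<subseteq> mcont" unfolding S_def by (rule closure_sub_mcont)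
  define C where "C = (\<Union>g\<in>S. g x)"
  have "compact C"
  proof (rule compactI)
    fix \<C> assume opn: "\<forall>t\<in>\<C>. open t" and cov: "C \<subseteq> \<Union>\<C>"
    have "\<forall>g\<in>S. \<exists>D W. finite D \<and> D \<subseteq> \<C> \<and> entourage W \<and> W `` (g x) \<subseteq> \<Union>D"
    proof
      fix g assume g: "g \<in> S"
      have "compact (g x)" using g Sm mcont_compact by blast
      moreover have "g x \<subseteq> \<Union>\<C>" using cov g unfolding C_def by blast
      ultimately obtain D where D: "D \<subseteq> \<C>" "finite D" "g x \<subseteq> \<Union>D"
        using opn by (meson compactE)
      have "open (\<Union>D)" using D opn by blast
      then obtain W where "entourage W" "W `` (g x) \<subseteq> \<Union>D"
        using compact_in_open_ent[OF \<open>compact (g x)\<close> _ D(3)] by blast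
      then show "\<exists>D W. finite D \<and> D \<subseteq> \<C> \<and> entourage W \<and> W `` (g x) \<subseteq> \<Union>D"
        using D by blast
    qed
    then have "\<exists>Df. \<forall>g\<in>S. \<exists>W. finite (Df g) \<and> Df g \<subseteq> \<C> \<and> entourage W \<and> W `` (g x) \<subseteq> \<Union>(Df g)"
      by (rule bchoice)
    then obtain Df where "\<forall>g\<in>S. \<exists>W. finite (Df g) \<and> Df g \<subseteq> \<C> \<and> entourage W \<and> W `` (g x) \<subseteq> \<Union>(Df g)"
      by blast
    then have "\<exists>Wf. \<forall>g\<in>S. finite (Df g) \<and> Df g \<subseteq> \<C> \<and> entourage (Wf g) \<and> Wf g `` (g x) \<subseteq> \<Union>(Df g)"
      by (rule bchoice)
    then obtain Wf where DW0: "\<forall>g\<in>S. finite (Df g) \<and> Df g \<subseteq> \<C> \<and> entourage (Wf g) \<and> Wf g `` (g x) \<subseteq> \<Union>(Df g)"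
      by blast
    have DW: "finite (Df g) \<and> Df g \<subseteq> \<C> \<and> entourage (Wf g) \<and> Wf g `` (g x) \<subseteq> \<Union>(Df g)" if "g \<in> S" for g
      using DW0 that by (rule bspec)
    have "\<exists>T. finite T \<and> T \<subseteq> S \<and> (\<forall>g\<in>S. \<exists>t\<in>T. g \<in> ball_uc t (Wf t))"
      by (rule compact_net_var[OF cpt[folded S_def]]) (use DW in blast)
    then obtain T where T: "finite T" "T \<subseteq> S" "\<forall>g\<in>S. \<exists>t\<in>T. g \<in> ball_uc t (Wf t)"
      by blast
    have "C \<subseteq> \<Union>(\<Union>t\<in>T. Df t)"
    proof
      fix z assume "z \<in> C"
      then obtain g where g: "g \<in> S" "z \<in> g x" unfolding C_def by blast
      then obtain t where t: "t \<in> T" "g \<in> ball_uc t (Wf t)" using T(3) by blast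
      have "hc (Wf t) (t x) (g x)" using ball_hc t T(2) Sm by blast
      then obtain y where y: "y \<in> t x" "(y, z) \<in> Wf t" using g(2) unfolding hc_def by blast
      have zi: "z \<in> Wf t `` (t x)" by (rule ImageI[OF y(2) y(1)])
      have tS: "t \<in> S" using t(1) T(2) by blast
      have "Wf t `` (t x) \<subseteq> \<Union>(Df t)" using DW[OF tS] by (rule conjunct2[OF conjunct2[OF conjunct2]])
      then have "z \<in> \<Union>(Df t)" using zi by (rule subsetD)
      then show "z \<in> \<Union>(\<Union>t\<in>T. Df t)" using t by blast
    qed
    moreover have "finite (\<Union>t\<in>T. Df t)"
      using T(1) proof (rule finite_UN_I)
      fix t assume "t \<in> T"
      then show "finite (Df t)" using DW T(2) by blast
    qed
    moreover have "(\<Union>t\<in>T. Df t) \<subseteq> \<C>"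
    proof (rule UN_least)
      fix t assume "t \<in> T"
      then show "Df t \<subseteq> \<C>" using DW T(2) by blast
    qed
    ultimately show "\<exists>C'. C' \<subseteq> \<C> \<and> finite C' \<and> C \<subseteq> \<Union>C'" by blast
  qed
  have "(\<Union>f\<in>F. f x) \<subseteq> C" using F_sub_closure[OF Fm] unfolding C_def S_def by blast
  then have "closure (\<Union>f\<in>F. f x) \<subseteq> C"
    using closure_minimal compact_imp_closed[OF \<open>compact C\<close>] by blast
  then have "closure (\<Union>f\<in>F. f x) = C \<inter> closure (\<Union>f\<in>F. f x)" by blast
  then show "compact (closure (\<Union>f\<in>F. f x))"
    using compact_Int_closed[OF \<open>compact C\<close>, of "closure (\<Union>f\<in>F. f x)"] by simp
qed

lemma mcont_local:
  fixes t :: "'a::topological_space \<Rightarrow> 'b::uniform_space set"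
  assumes "t \<in> mcont" "entourage W"
  shows "\<exists>U. open U \<and> x \<in> U \<and> (\<forall>u\<in>U. t u \<subseteq> W `` (t x)) \<and> (\<forall>u\<in>U. \<forall>y\<in>t x. \<exists>c\<in>t u. (y, c) \<in> W O W)"
proof -
  have usc: "usc t" and lsc: "lsc t" using assms(1) unfolding mcont_def by auto
  obtain O1 where O1: "open O1" "t x \<subseteq> O1" "O1 \<subseteq> W `` (t x)" using ent_interior_set[OF assms(2)] by blast
  obtain U0 where U0: "open U0" "x \<in> U0" "\<forall>u\<in>U0. t u \<subseteq> O1"
    using usc O1(1,2) unfolding usc_def by blast
  obtain P where P: "finite P" "P \<subseteq> t x" "t x \<subseteq> W `` P"
    using compact_ent_cover[OF mcont_compact[OF assms(1)] assms(2)] by blast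
  have "\<forall>p\<in>P. \<exists>U. open U \<and> x \<in> U \<and> (\<forall>u\<in>U. t u \<inter> W `` {p} \<noteq> {})"
  proof
    fix p assume p: "p \<in> P"
    obtain Q where Q: "open Q" "p \<in> Q" "Q \<subseteq> W `` {p}" using ent_interior[OF assms(2)] by blast
    have "t x \<inter> Q \<noteq> {}" using p P(2) Q(2) by blast
    then obtain U where U: "open U" "x \<in> U" "\<forall>u\<in>U. t u \<inter> Q \<noteq> {}"
      using lsc Q(1) unfolding lsc_def by blast
    have "\<forall>u\<in>U. t u \<inter> W `` {p} \<noteq> {}" using U(3) Q(3) by blast
    then show "\<exists>U. open U \<and> x \<in> U \<and> (\<forall>u\<in>U. t u \<inter> W `` {p} \<noteq> {})" using U(1,2) by blast
  qed
  then have "\<exists>Uf. \<forall>p\<in>P. open (Uf p) \<and> x \<in> Uf p \<and> (\<forall>u\<in>Uf p. t u \<inter> W `` {p} \<noteq> {})"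
    by (rule bchoice)
  then obtain Uf where Uf: "\<forall>p\<in>P. open (Uf p) \<and> x \<in> Uf p \<and> (\<forall>u\<in>Uf p. t u \<inter> W `` {p} \<noteq> {})"
    by blast
  define U where "U = U0 \<inter> (\<Inter>p\<in>P. Uf p)"
  have "open U" unfolding U_def using U0(1) Uf P(1) by (intro open_Int open_INT) auto
  moreover have "x \<in> U" using U0 Uf by (auto simp: U_def)
  moreover have "\<forall>u\<in>U. t u \<subseteq> W `` (t x)" using U0(3) O1(3) unfolding U_def by blast
  moreover have "\<forall>u\<in>U. \<forall>y\<in>t x. \<exists>c\<in>t u. (y, c) \<in> W O W"
  proof (intro ballI)
    fix u y assume u: "u \<in> U" and y: "y \<in> t x"
    obtain p where p: "p \<in> P" "(p, y) \<in> W" using y P(3) by blast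
    have "u \<in> Uf p" using u p(1) unfolding U_def by blast
    then have "t u \<inter> W `` {p} \<noteq> {}" using Uf p(1) by blast
    then obtain c where c: "c \<in> t u" "(p, c) \<in> W" by blast
    have "(y, p) \<in> W" using ent_sym[OF assms(2) p(2)] .
    then have "(y, c) \<in> W O W" using c(2) by (rule relcompI)
    then show "\<exists>c\<in>t u. (y, c) \<in> W O W" using c(1) by blast
  qed
  ultimately show ?thesis by blast
qed

lemma forward_equi:
  fixes F :: "('a::topological_space \<Rightarrow> 'b::uniform_space set) set"
  assumes Fm: "F \<subseteq> mcont" and cpt: "compactin tau_uc (tau_uc closure_of F)"
  shows "equicontinuous F"
  unfolding equicontinuous_def
proof (intro allI impI)
  fix x V assume V: "entourage (V::('b \<times> 'b) set)"
  obtain W1 where W1: "entourage W1" "W1 O W1 \<subseteq> V" using ent_split[OF V] by blast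
  obtain W where W: "entourage W" "W O W \<subseteq> W1" using ent_split[OF W1(1)] by blast
  define S where "S = tau_uc closure_of F"
  have Sm: "S \<subseteq> mcont" unfolding S_def by (rule closure_sub_mcont)
  have "\<exists>T. finite T \<and> T \<subseteq> S \<and> (\<forall>g\<in>S. \<exists>t\<in>T. g \<in> ball_uc t ((\<lambda>_. W) t))"
    by (rule compact_net_var[OF cpt[folded S_def]]) (use W in blast)
  then obtain T where T: "finite T" "T \<subseteq> S" "\<forall>g\<in>S. \<exists>t\<in>T. g \<in> ball_uc t W" by auto
  have "\<forall>t\<in>T. \<exists>U. open U \<and> x \<in> U \<and> (\<forall>u\<in>U. t u \<subseteq> W `` (t x)) \<and> (\<forall>u\<in>U. \<forall>y\<in>t x. \<exists>c\<in>t u. (y, c) \<in> W O W)"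
  proof
    fix t assume "t \<in> T"
    then have "t \<in> mcont" using T(2) Sm by blast
    then show "\<exists>U. open U \<and> x \<in> U \<and> (\<forall>u\<in>U. t u \<subseteq> W `` (t x)) \<and> (\<forall>u\<in>U. \<forall>y\<in>t x. \<exists>c\<in>t u. (y, c) \<in> W O W)"
      using mcont_local W(1) by blast
  qed
  then have "\<exists>Uf. \<forall>t\<in>T. open (Uf t) \<and> x \<in> Uf t \<and> (\<forall>u\<in>Uf t. t u \<subseteq> W `` (t x)) \<and> (\<forall>u\<in>Uf t. \<forall>y\<in>t x. \<exists>c\<in>t u. (y, c) \<in> W O W)"
    by (rule bchoice)
  then obtain Uf where Uf: "\<forall>t\<in>T. open (Uf t) \<and> x \<in> Uf t \<and> (\<forall>u\<in>Uf t. t u \<subseteq> W `` (t x)) \<and> (\<forall>u\<in>Uf t. \<forall>y\<in>t x. \<exists>c\<in>t u. (y, c) \<in> W O W)"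
    by blast
  define U where "U = (\<Inter>t\<in>T. Uf t)"
  have "open U" unfolding U_def using Uf T(1) by (intro open_INT) auto
  moreover have "x \<in> U" using Uf by (auto simp: U_def)
  moreover have "\<forall>f\<in>F. (\<forall>u\<in>U. f u \<subseteq> V `` f x) \<and> (\<forall>u\<in>U. \<forall>y\<in>f x. f u \<inter> V `` {y} \<noteq> {})"
  proof
    fix f assume f: "f \<in> F"
    then have "f \<in> S" using F_sub_closure[OF Fm] unfolding S_def by blast
    then obtain t where t: "t \<in> T" "f \<in> ball_uc t W" using T(3) by blast
    have tm: "t \<in> mcont" using t(1) T(2) Sm by blast
    have h: "\<And>z. hc W (t z) (f z)" using ball_hc[OF tm t(2)] .
    have Ut: "\<And>u. u \<in> U \<Longrightarrow> t u \<subseteq> W `` (t x) \<and> (\<forall>y\<in>t x. \<exists>c\<in>t u. (y, c) \<in> W O W)"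
      using Uf t(1) unfolding U_def by blast
    have A: "\<forall>u\<in>U. f u \<subseteq> V `` f x"
    proof (intro ballI subsetI)
      fix u z assume u: "u \<in> U" and z: "z \<in> f u"
      obtain z' where z': "z' \<in> t u" "(z', z) \<in> W" using h[of u] z unfolding hc_def by blast
      have "z' \<in> W `` (t x)" using Ut[OF u] z'(1) by blast
      then obtain a where a: "a \<in> t x" "(a, z') \<in> W" by blast
      obtain b where b: "b \<in> f x" "(a, b) \<in> W" using h[of x] a(1) unfolding hc_def by blast
      have "(b, a) \<in> W" using ent_sym[OF W(1) b(2)] .
      then have "(b, z) \<in> W O W O W" using a(2) z'(2) by (rule chain3)
      then have "(b, z) \<in> V" using sub3(1)[OF W(1) W(2) W1(2)] by blast
      then show "z \<in> V `` f x" using b(1) by blast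
    qed
    have B: "\<forall>u\<in>U. \<forall>y\<in>f x. f u \<inter> V `` {y} \<noteq> {}"
    proof (intro ballI)
      fix u y assume u: "u \<in> U" and y: "y \<in> f x"
      obtain a where a: "a \<in> t x" "(a, y) \<in> W" using h[of x] y unfolding hc_def by blast
      have ya: "(y, a) \<in> W" using ent_sym[OF W(1) a(2)] .
      obtain c where c: "c \<in> t u" "(a, c) \<in> W O W" using Ut[OF u] a(1) by blast
      obtain d where d: "d \<in> f u" "(c, d) \<in> W" using h[of u] c(1) unfolding hc_def by blast
      have "(y, d) \<in> W O (W O W) O W" using ya c(2) d(2) by (rule chain3)
      then have "(y, d) \<in> V" using sub3(2)[OF W(1) W(2) W1(2)] by blast
      then show "f u \<inter> V `` {y} \<noteq> {}" using d(1) by blast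
    qed
    show "(\<forall>u\<in>U. f u \<subseteq> V `` f x) \<and> (\<forall>u\<in>U. \<forall>y\<in>f x. f u \<inter> V `` {y} \<noteq> {})"
      using A B by blast
  qed
  ultimately show "\<exists>U. open U \<and> x \<in> U \<and> (\<forall>f\<in>F. (\<forall>u\<in>U. f u \<subseteq> V `` f x) \<and> (\<forall>u\<in>U. \<forall>y\<in>f x. f u \<inter> V `` {y} \<noteq> {}))"
    by blast
qed

lemma sub_good:
  fixes W4 :: "('b::uniform_space \<times> 'b) set"
  assumes "W4 \<subseteq> W2" "entourage W2" "W2 O W2 \<subseteq> W1" "W1 O W1 \<subseteq> V"
  shows "(W4 O W2) O W4 \<subseteq> V"
proof
  fix p assume "p \<in> (W4 O W2) O W4"
  then obtain a b c d where abcd: "p = (a, d)" "(a, b) \<in> W4" "(b, c) \<in> W2" "(c, d) \<in> W4" by blast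
  have "W2 \<subseteq> W1" using ent_sub_comp[OF assms(2)] assms(3) by blast
  have "(a, c) \<in> W1" using abcd assms(1,3) by blast
  moreover have "(c, d) \<in> W1" using abcd(4) assms(1) \<open>W2 \<subseteq> W1\<close> by blast
  ultimately show "p \<in> V" using assms(4) abcd(1) by blast
qed

lemma forward_fep:
  fixes F :: "('a::topological_space \<Rightarrow> 'b::uniform_space set) set"
  assumes Fm: "F \<subseteq> mcont" and cpt: "compactin tau_uc (tau_uc closure_of F)"
  shows "finite_extension F"
  unfolding finite_extension_def
proof (intro allI impI)
  fix V assume V: "entourage (V::('b \<times> 'b) set)"
  obtain W1 where W1: "entourage W1" "W1 O W1 \<subseteq> V" using ent_split[OF V] by blast
  obtain W2 where W2: "entourage W2" "W2 O W2 \<subseteq> W1" using ent_split[OF W1(1)] by blast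
  obtain W3 where W3: "entourage W3" "W3 O W3 \<subseteq> W2" using ent_split[OF W2(1)] by blast
  obtain W4 where W4: "entourage W4" "W4 O W4 \<subseteq> W3" using ent_split[OF W3(1)] by blast
  have W44: "W4 O W4 O W4 \<subseteq> W2" using sub3(1)[OF W4(1) W4(2) W3(2)] .
  have "W4 \<subseteq> W2" using ent_sub_comp[OF W4(1)] ent_sub_comp[OF W3(1)] W4(2) W3(2) by blast
  have good: "(W4 O W2) O W4 \<subseteq> V" using sub_good[OF \<open>W4 \<subseteq> W2\<close> W2(1) W2(2) W1(2)] .
  define S where "S = tau_uc closure_of F"
  have Sm: "S \<subseteq> mcont" unfolding S_def by (rule closure_sub_mcont)
  have "\<exists>T. finite T \<and> T \<subseteq> S \<and> (\<forall>g\<in>S. \<exists>t\<in>T. g \<in> ball_uc t ((\<lambda>_. W4) t))"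
    by (rule compact_net_var[OF cpt[folded S_def]]) (use W4 in blast)
  then obtain T where T: "finite T" "T \<subseteq> S" "\<forall>g\<in>S. \<exists>t\<in>T. g \<in> ball_uc t W4" by auto
  define Bad where "Bad = {p \<in> T \<times> T. \<not> (\<forall>z. hc W2 (fst p z) (snd p z))}"
  have "\<forall>p\<in>Bad. \<exists>z. \<not> hc W2 (fst p z) (snd p z)" unfolding Bad_def by blast
  then have "\<exists>xf. \<forall>p\<in>Bad. \<not> hc W2 (fst p (xf p)) (snd p (xf p))" by (rule bchoice)
  then obtain xf where xf: "\<forall>p\<in>Bad. \<not> hc W2 (fst p (xf p)) (snd p (xf p))" by blast
  define P where "P = (\<lambda>p. (xf p, W4)) ` Bad"
  have "Bad \<subseteq> T \<times> T" unfolding Bad_def by (rule Collect_restrict)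
  moreover have "finite (T \<times> T)" using T(1) by (rule finite_cartesian_product) (rule T(1))
  ultimately have "finite Bad" by (rule finite_subset)
  then have "finite P" unfolding P_def by simp
  moreover have "\<forall>(x, W)\<in>P. entourage W" unfolding P_def using W4(1) by auto
  moreover have "{(f, g). f \<in> F \<and> g \<in> F \<and> (\<forall>(x, W)\<in>P. (f, g) \<in> pdagger x W)} \<subseteq> udagger V"
  proof
    fix q assume "q \<in> {(f, g). f \<in> F \<and> g \<in> F \<and> (\<forall>(x, W)\<in>P. (f, g) \<in> pdagger x W)}"
    then obtain f g where q: "q = (f, g)" "f \<in> F" "g \<in> F" "\<forall>(x, W)\<in>P. (f, g) \<in> pdagger x W" by blast
    have fm: "f \<in> mcont" and gm: "g \<in> mcont" using q Fm by auto
    have "f \<in> S" "g \<in> S" using F_sub_closure[OF Fm] q unfolding S_def by auto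
    then obtain s t where st: "s \<in> T" "f \<in> ball_uc s W4" "t \<in> T" "g \<in> ball_uc t W4" using T(3) by blast
    have sm: "s \<in> mcont" and tm: "t \<in> mcont" using st T(2) Sm by auto
    have hs: "\<And>z. hc W4 (s z) (f z)" using ball_hc[OF sm st(2)] .
    have ht: "\<And>z. hc W4 (t z) (g z)" using ball_hc[OF tm st(4)] .
    have "(s, t) \<notin> Bad"
    proof
      assume B: "(s, t) \<in> Bad"
      let ?x = "xf (s, t)"
      have "(?x, W4) \<in> P" unfolding P_def using B by blast
      then have "(f, g) \<in> pdagger ?x W4" using q(4) by blast
      then have hfg: "hc W4 (f ?x) (g ?x)" by (rule pdagger_hc[of f ?x g, OF mcont_ne[OF fm] mcont_ne[OF gm], THEN iffD1])
      have "hc W4 (g ?x) (t ?x)" using hc_sym[OF W4(1) ht[of ?x]] .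
      then have "hc (W4 O W4 O W4) (s ?x) (t ?x)" by (rule hc_comp[OF hs[of ?x] hc_comp[OF hfg]])
      then have "hc W2 (s ?x) (t ?x)" by (rule hc_mono[OF W44])
      then show False using xf B by auto
    qed
    then have st2: "\<And>z. hc W2 (s z) (t z)" unfolding Bad_def using st(1,3) by auto
    have "\<And>z. hc V (f z) (g z)"
    proof -
      fix z
      have "hc W4 (f z) (s z)" using hc_sym[OF W4(1) hs[of z]] .
      then have "hc (W4 O W2) (f z) (t z)" using st2[of z] by (rule hc_comp)
      then have "hc ((W4 O W2) O W4) (f z) (g z)" using ht[of z] by (rule hc_comp)
      then show "hc V (f z) (g z)" by (rule hc_mono[OF good])
    qed
    then have "(f, g) \<in> udagger V" using udagger_hc[OF fm gm] by blast
    then show "q \<in> udagger V" using q(1) by simp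
  qed
  ultimately show "\<exists>P. finite P \<and> (\<forall>(x, W)\<in>P. entourage W) \<and>
        {(f, g). f \<in> F \<and> g \<in> F \<and> (\<forall>(x, W)\<in>P. (f, g) \<in> pdagger x W)} \<subseteq> udagger V"
    by blast
qed



lemma ultra_ne: "ultra U \<Longrightarrow> U \<noteq> bot"
  unfolding ultra_def by blast

lemma ultra_not: "ultra U \<Longrightarrow> \<not> eventually P U \<Longrightarrow> eventually (\<lambda>x. \<not> P x) U"
  unfolding ultra_def by blast

lemma ultra_ex: "ultra U \<Longrightarrow> eventually P U \<Longrightarrow> \<exists>x. P x"
  using eventually_happens'[OF ultra_ne] by blast

definition hlim :: "('a \<Rightarrow> 'b set) filter \<Rightarrow> 'a \<Rightarrow> ('b::uniform_space) set" where
  "hlim U x = {y. \<forall>W. entourage W \<longrightarrow> eventually (\<lambda>g. g x \<inter> W `` {y} \<noteq> {}) U}"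

lemma closure_pointwise_sub:
  fixes F :: "('a::topological_space \<Rightarrow> 'b::uniform_space set) set"
  assumes "g \<in> tau_uc closure_of F"
  shows "g x \<subseteq> closure (\<Union>f\<in>F. f x)"
proof
  fix y assume y: "y \<in> g x"
  have gm: "g \<in> mcont" using assms closure_sub_mcont by blast
  show "y \<in> closure (\<Union>f\<in>F. f x)"
  proof (rule closure_ent2)
    fix W :: "('b \<times> 'b) set" assume W: "entourage W"
    obtain f where f: "f \<in> F" "f \<in> ball_uc g W" using closure_approx[OF assms W] by blast
    have "hc W (g x) (f x)" using ball_hc[OF gm f(2)] .
    then obtain z where "z \<in> f x" "(y, z) \<in> W" using y unfolding hc_def by blast
    then show "W `` {y} \<inter> (\<Union>f\<in>F. f x) \<noteq> {}" using f(1) by blast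
  qed
qed

context
  fixes F :: "('a::topological_space \<Rightarrow> 'b::uniform_space set) set"
    and U :: "('a \<Rightarrow> 'b set) filter"
  assumes PR: "pointwise_relcompact F"
    and UU: "ultra U"
    and US: "eventually (\<lambda>g. g \<in> tau_uc closure_of F) U"
begin

lemma claim_near:
  fixes k :: 'b and W' :: "('b \<times> 'b) set"
  assumes W': "entourage W'" and ev: "eventually (\<lambda>g. g x \<inter> W' `` {k} \<noteq> {}) U"
  shows "\<exists>y\<in>hlim U x. (k, y) \<in> W' O W'"
proof (rule ccontr)
  assume na: "\<not> (\<exists>y\<in>hlim U x. (k, y) \<in> W' O W')"
  define K where "K = closure (\<Union>f\<in>F. f x)"
  have cK: "compact K" using PR unfolding pointwise_relcompact_def K_def by blast
  define N where "N = K \<inter> closure (W' `` {k})"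
  have cN: "compact N" unfolding N_def using cK by (rule compact_Int_closed) simp
  have "\<forall>y\<in>N. \<exists>Wy. entourage Wy \<and> eventually (\<lambda>g. g x \<inter> Wy `` {y} = {}) U"
  proof
    fix y assume y: "y \<in> N"
    have "W' `` {y} \<inter> W' `` {k} \<noteq> {}" using closure_ent1[OF _ W'] y unfolding N_def by blast
    then obtain m where m: "(y, m) \<in> W'" "(k, m) \<in> W'" by blast
    have "(m, y) \<in> W'" using ent_sym[OF W' m(1)] .
    then have "(k, y) \<in> W' O W'" using m(2) by blast
    then have "y \<notin> hlim U x" using na by blast
    then obtain Wy where Wy: "entourage Wy" "\<not> eventually (\<lambda>g. g x \<inter> Wy `` {y} \<noteq> {}) U"
      unfolding hlim_def by blast
    have "eventually (\<lambda>g. \<not> (g x \<inter> Wy `` {y} \<noteq> {})) U" using ultra_not[OF UU Wy(2)] .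
    then show "\<exists>Wy. entourage Wy \<and> eventually (\<lambda>g. g x \<inter> Wy `` {y} = {}) U" using Wy(1) by auto
  qed
  then have "\<exists>Wf. \<forall>y\<in>N. entourage (Wf y) \<and> eventually (\<lambda>g. g x \<inter> Wf y `` {y} = {}) U"
    by (rule bchoice)
  then obtain Wf where Wf: "\<forall>y\<in>N. entourage (Wf y) \<and> eventually (\<lambda>g. g x \<inter> Wf y `` {y} = {}) U"
    by blast
  have "\<forall>y. \<exists>O'. open O' \<and> y \<in> O' \<and> O' \<subseteq> (if y \<in> N then Wf y else UNIV) `` {y}"
  proof
    fix y
    have "entourage (if y \<in> N then Wf y else UNIV)" using Wf entourage_UNIV by auto
    then show "\<exists>O'. open O' \<and> y \<in> O' \<and> O' \<subseteq> (if y \<in> N then Wf y else UNIV) `` {y}"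
      using ent_interior by blast
  qed
  then obtain Of where Of: "\<And>y. open (Of y) \<and> y \<in> Of y \<and> Of y \<subseteq> (if y \<in> N then Wf y else UNIV) `` {y}"
    by metis
  have "N \<subseteq> (\<Union>y\<in>N. Of y)" using Of by blast
  then obtain Y0 where Y0: "Y0 \<subseteq> N" "finite Y0" "N \<subseteq> (\<Union>y\<in>Y0. Of y)"
    using compactE_image[OF cN, of N Of] Of by metis
  have "eventually (\<lambda>g. \<forall>y\<in>Y0. g x \<inter> Wf y `` {y} = {}) U"
    using Y0(2) proof (rule eventually_ball_finite)
    show "\<forall>y\<in>Y0. eventually (\<lambda>g. g x \<inter> Wf y `` {y} = {}) U" using Wf Y0(1) by blast
  qed
  then have "eventually (\<lambda>g. (\<forall>y\<in>Y0. g x \<inter> Wf y `` {y} = {}) \<and> g x \<inter> W' `` {k} \<noteq> {} \<and> g \<in> tau_uc closure_of F) U"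
    using ev US by (intro eventually_conj)
  then have "\<exists>g. (\<forall>y\<in>Y0. g x \<inter> Wf y `` {y} = {}) \<and> g x \<inter> W' `` {k} \<noteq> {} \<and> g \<in> tau_uc closure_of F"
    by (rule ultra_ex[OF UU])
  then obtain g where g: "\<forall>y\<in>Y0. g x \<inter> Wf y `` {y} = {}" "g x \<inter> W' `` {k} \<noteq> {}" "g \<in> tau_uc closure_of F"
    by blast
  obtain z where z: "z \<in> g x" "z \<in> W' `` {k}" using g(2) by blast
  have "z \<in> K" using closure_pointwise_sub[OF g(3)] z(1) unfolding K_def by blast
  moreover have "z \<in> closure (W' `` {k})" using z(2) closure_subset by blast
  ultimately have "z \<in> N" unfolding N_def by blast
  then obtain y where y: "y \<in> Y0" "z \<in> Of y" using Y0(3) by blast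
  have "y \<in> N" using y(1) Y0(1) by blast
  then have "z \<in> Wf y `` {y}" using Of[of y] y(2) by auto
  then show False using g(1) y(1) z(1) by blast
qed

lemma ev_B1:
  fixes W :: "('b \<times> 'b) set"
  assumes W: "entourage W"
  shows "eventually (\<lambda>g. \<forall>z\<in>g x. \<exists>y\<in>hlim U x. (z, y) \<in> W) U"
proof -
  obtain Wb where Wb: "entourage Wb" "Wb O Wb \<subseteq> W" using ent_split[OF W] by blast
  obtain W' where W': "entourage W'" "W' O W' \<subseteq> Wb" using ent_split[OF Wb(1)] by blast
  have W3: "W' O W' O W' \<subseteq> W" using sub3(1)[OF W'(1) W'(2) Wb(2)] .
  define K where "K = closure (\<Union>f\<in>F. f x)"
  have cK: "compact K" using PR unfolding pointwise_relcompact_def K_def by blast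
  obtain T0 where T0: "finite T0" "T0 \<subseteq> K" "K \<subseteq> W' `` T0"
    using compact_ent_cover[OF cK W'(1)] by blast
  define J where "J = {k\<in>T0. eventually (\<lambda>g. g x \<inter> W' `` {k} \<noteq> {}) U}"
  have "finite (T0 - J)" using T0(1) by blast
  then have evn: "eventually (\<lambda>g. \<forall>k\<in>T0 - J. g x \<inter> W' `` {k} = {}) U"
  proof (rule eventually_ball_finite)
    show "\<forall>k\<in>T0 - J. eventually (\<lambda>g. g x \<inter> W' `` {k} = {}) U"
    proof
      fix k assume "k \<in> T0 - J"
      then have "\<not> eventually (\<lambda>g. g x \<inter> W' `` {k} \<noteq> {}) U" unfolding J_def by blast
      from ultra_not[OF UU this] show "eventually (\<lambda>g. g x \<inter> W' `` {k} = {}) U" by simp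
    qed
  qed
  have near: "\<And>k. k \<in> J \<Longrightarrow> \<exists>y\<in>hlim U x. (k, y) \<in> W' O W'"
    using claim_near[OF W'(1)] unfolding J_def by blast
  show ?thesis
  proof (rule eventually_mono[OF eventually_conj[OF evn US]])
    fix g assume g: "(\<forall>k\<in>T0 - J. g x \<inter> W' `` {k} = {}) \<and> g \<in> tau_uc closure_of F"
    show "\<forall>z\<in>g x. \<exists>y\<in>hlim U x. (z, y) \<in> W"
    proof
      fix z assume z: "z \<in> g x"
      have "z \<in> K" using closure_pointwise_sub[of g F x] g z unfolding K_def by blast
      then obtain k where k: "k \<in> T0" "(k, z) \<in> W'" using T0(3) by blast
      have "k \<in> J"
      proof (rule ccontr)
        assume "k \<notin> J"
        then have "g x \<inter> W' `` {k} = {}" using g k(1) by blast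
        then show False using z k(2) by blast
      qed
      then obtain y where y: "y \<in> hlim U x" "(k, y) \<in> W' O W'" using near by blast
      have "(z, k) \<in> W'" using ent_sym[OF W'(1) k(2)] .
      then have "(z, y) \<in> W' O W' O W'" using y(2) by (rule relcompI)
      then show "\<exists>y\<in>hlim U x. (z, y) \<in> W" using W3 y(1) by blast
    qed
  qed
qed

lemma hlim_sub_K: "hlim U x \<subseteq> closure (\<Union>f\<in>F. f x)"
proof
  fix y assume y: "y \<in> hlim U x"
  have "y \<in> closure (closure (\<Union>f\<in>F. f x))"
  proof (rule closure_ent2)
    fix W :: "('b \<times> 'b) set" assume W: "entourage W"
    have "eventually (\<lambda>g. g x \<inter> W `` {y} \<noteq> {}) U" using y W unfolding hlim_def by blast
    then have "eventually (\<lambda>g. g x \<inter> W `` {y} \<noteq> {} \<and> g \<in> tau_uc closure_of F) U"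
      using US by (rule eventually_conj)
    then have "\<exists>g. g x \<inter> W `` {y} \<noteq> {} \<and> g \<in> tau_uc closure_of F" by (rule ultra_ex[OF UU])
    then obtain g where g: "g x \<inter> W `` {y} \<noteq> {}" "g \<in> tau_uc closure_of F" by blast
    then obtain z where z: "z \<in> g x" "z \<in> W `` {y}" by blast
    have "z \<in> closure (\<Union>f\<in>F. f x)" using closure_pointwise_sub[OF g(2)] z(1) by blast
    then show "W `` {y} \<inter> closure (\<Union>f\<in>F. f x) \<noteq> {}" using z(2) by blast
  qed
  then show "y \<in> closure (\<Union>f\<in>F. f x)" by simp
qed

lemma hlim_closed: "closed (hlim U x)"
  unfolding closure_subset_eq[symmetric]
proof
  fix y assume y: "y \<in> closure (hlim U x)"
  show "y \<in> hlim U x"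
    unfolding hlim_def
  proof (intro CollectI allI impI)
    fix W :: "('b \<times> 'b) set" assume W: "entourage W"
    obtain W3 where W3: "entourage W3" "W3 O W3 \<subseteq> W" using ent_split[OF W] by blast
    obtain y' where y': "y' \<in> W3 `` {y}" "y' \<in> hlim U x" using closure_ent1[OF y W3(1)] by blast
    have "eventually (\<lambda>g. g x \<inter> W3 `` {y'} \<noteq> {}) U" using y'(2) W3(1) unfolding hlim_def by blast
    then show "eventually (\<lambda>g. g x \<inter> W `` {y} \<noteq> {}) U"
    proof (rule eventually_mono)
      fix g assume "g x \<inter> W3 `` {y'} \<noteq> {}"
      then obtain z where z: "z \<in> g x" "(y', z) \<in> W3" by blast
      have "(y, y') \<in> W3" using y'(1) by blast
      then have "(y, z) \<in> W3 O W3" using z(2) by (rule relcompI)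
      then show "g x \<inter> W `` {y} \<noteq> {}" using W3(2) z(1) by blast
    qed
  qed
qed

lemma hlim_compact: "compact (hlim U x)"
proof -
  have cK: "compact (closure (\<Union>f\<in>F. f x))" using PR unfolding pointwise_relcompact_def by blast
  have "compact (closure (\<Union>f\<in>F. f x) \<inter> hlim U x)" using cK hlim_closed by (rule compact_Int_closed)
  moreover have "closure (\<Union>f\<in>F. f x) \<inter> hlim U x = hlim U x" using hlim_sub_K by blast
  ultimately show ?thesis by simp
qed

lemma ev_B2:
  fixes W :: "('b \<times> 'b) set"
  assumes W: "entourage W"
  shows "eventually (\<lambda>g. \<forall>y\<in>hlim U x. \<exists>z\<in>g x. (y, z) \<in> W) U"
proof -
  obtain W' where W': "entourage W'" "W' O W' \<subseteq> W" using ent_split[OF W] by blast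
  obtain Y0 where Y0: "finite Y0" "Y0 \<subseteq> hlim U x" "hlim U x \<subseteq> W' `` Y0"
    using compact_ent_cover[OF hlim_compact W'(1)] by blast
  have "eventually (\<lambda>g. \<forall>y0\<in>Y0. g x \<inter> W' `` {y0} \<noteq> {}) U"
    using Y0(1)
  proof (rule eventually_ball_finite)
    show "\<forall>y0\<in>Y0. eventually (\<lambda>g. g x \<inter> W' `` {y0} \<noteq> {}) U"
      using Y0(2) W'(1) unfolding hlim_def by blast
  qed
  then show ?thesis
  proof (rule eventually_mono)
    fix g assume g: "\<forall>y0\<in>Y0. g x \<inter> W' `` {y0} \<noteq> {}"
    show "\<forall>y\<in>hlim U x. \<exists>z\<in>g x. (y, z) \<in> W"
    proof
      fix y assume "y \<in> hlim U x"
      then obtain y0 where y0: "y0 \<in> Y0" "(y0, y) \<in> W'" using Y0(3) by blast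
      obtain z where z: "z \<in> g x" "(y0, z) \<in> W'" using g y0(1) by blast
      have "(y, y0) \<in> W'" using ent_sym[OF W'(1) y0(2)] .
      then have "(y, z) \<in> W' O W'" using z(2) by (rule relcompI)
      then show "\<exists>z\<in>g x. (y, z) \<in> W" using W'(2) z(1) by blast
    qed
  qed
qed

lemma ev_hc:
  fixes W :: "('b \<times> 'b) set"
  assumes W: "entourage W"
  shows "eventually (\<lambda>g. hc W (hlim U x) (g x)) U"
  using eventually_conj[OF ev_B1[OF W, of x] ev_B2[OF W, of x]]
proof (rule eventually_mono)
  fix g assume g: "(\<forall>z\<in>g x. \<exists>y\<in>hlim U x. (z, y) \<in> W) \<and> (\<forall>y\<in>hlim U x. \<exists>z\<in>g x. (y, z) \<in> W)"
  have "\<forall>z\<in>g x. \<exists>y\<in>hlim U x. (y, z) \<in> W"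
  proof
    fix z assume "z \<in> g x"
    then obtain y where "y \<in> hlim U x" "(z, y) \<in> W" using g by blast
    then show "\<exists>y\<in>hlim U x. (y, z) \<in> W" using ent_sym[OF W] by blast
  qed
  then show "hc W (hlim U x) (g x)" using g unfolding hc_def by blast
qed

lemma hlim_ne: "hlim U x \<noteq> {}"
proof -
  have "eventually (\<lambda>g. (\<forall>z\<in>g x. \<exists>y\<in>hlim U x. (z, y) \<in> UNIV) \<and> g \<in> tau_uc closure_of F) U"
    using ev_B1[OF entourage_UNIV] US by (rule eventually_conj)
  then have "\<exists>g. (\<forall>z\<in>g x. \<exists>y\<in>hlim U x. (z, y) \<in> UNIV) \<and> g \<in> tau_uc closure_of F"
    by (rule ultra_ex[OF UU])
  then obtain g where g: "\<forall>z\<in>g x. \<exists>y\<in>hlim U x. (z, y) \<in> UNIV" "g \<in> tau_uc closure_of F" by blast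
  have "g x \<noteq> {}" using mcont_ne closure_sub_mcont g(2) by blast
  then show ?thesis using g(1) by blast
qed

lemma sub_c:
  assumes "Z \<subseteq> W2" "W2 O W2 \<subseteq> W1" "W1 O W1 \<subseteq> V"
  shows "Z O ((Z O W2) O Z) \<subseteq> V"
proof
  fix p assume "p \<in> Z O ((Z O W2) O Z)"
  then obtain a b c d e where abcde: "p = (a, e)" "(a, b) \<in> Z" "(b, c) \<in> Z" "(c, d) \<in> W2" "(d, e) \<in> Z" by blast
  have "(a, c) \<in> W1" using abcde(2,3) assms(1,2) by blast
  moreover have "(c, e) \<in> W1" using abcde(4,5) assms(1,2) by blast
  ultimately show "p \<in> V" using assms(3) abcde(1) by blast
qed

lemma ev_unif:
  fixes V :: "('b \<times> 'b) set"
  assumes Fm: "F \<subseteq> mcont" and FEP: "finite_extension F" and V: "entourage V"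
  shows "eventually (\<lambda>g. g \<in> tau_uc closure_of F \<and> (\<forall>z. hc V (hlim U z) (g z))) U"
proof -
  obtain W1 where W1: "entourage W1" "W1 O W1 \<subseteq> V" using ent_split[OF V] by blast
  obtain W2 where W2: "entourage W2" "W2 O W2 \<subseteq> W1" using ent_split[OF W1(1)] by blast
  have "\<exists>P. finite P \<and> (\<forall>(x, W)\<in>P. entourage W) \<and>
    {(f, g). f \<in> F \<and> g \<in> F \<and> (\<forall>(x, W)\<in>P. (f, g) \<in> pdagger x W)} \<subseteq> udagger W2"
    using FEP[unfolded finite_extension_def, rule_format, OF W2(1)] .
  then obtain P where P0: "finite P \<and> (\<forall>(x, W)\<in>P. entourage W) \<and>
    {(f, g). f \<in> F \<and> g \<in> F \<and> (\<forall>(x, W)\<in>P. (f, g) \<in> pdagger x W)} \<subseteq> udagger W2"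
    by (rule exE)
  note P = conjunct1[OF P0] conjunct1[OF conjunct2[OF P0]] conjunct2[OF conjunct2[OF P0]]
  define W' where "W' = W2 \<inter> \<Inter>(snd ` P)"
  have "\<forall>W\<in>snd ` P. entourage W" using P(2) by auto
  then have "entourage (\<Inter>(snd ` P))" using P(1) by (intro ent_Inter) auto
  then have W'e: "entourage W'" unfolding W'_def using W2(1) by (intro entourage_Int)
  obtain Z1 where Z1: "entourage Z1" "Z1 O Z1 \<subseteq> W'" using ent_split[OF W'e] by blast
  obtain Z where Z: "entourage Z" "Z O Z \<subseteq> Z1" using ent_split[OF Z1(1)] by blast
  have Z4: "Z O (Z O Z) O Z \<subseteq> W'" using sub3(2)[OF Z(1) Z(2) Z1(2)] .
  have "Z \<subseteq> W2" using ent_sub_comp[OF Z(1)] ent_sub_comp[OF Z1(1)] Z(2) Z1(2) unfolding W'_def by blast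
  have subV: "Z O ((Z O W2) O Z) \<subseteq> V" using sub_c[OF \<open>Z \<subseteq> W2\<close> W2(2) W1(2)] .
  define E where "E = (\<lambda>g. g \<in> tau_uc closure_of F \<and> (\<forall>q\<in>P. hc Z (hlim U (fst q)) (g (fst q))))"
  have evP: "eventually (\<lambda>g. \<forall>q\<in>P. hc Z (hlim U (fst q)) (g (fst q))) U"
    using P(1)
  proof (rule eventually_ball_finite)
    show "\<forall>q\<in>P. eventually (\<lambda>g. hc Z (hlim U (fst q)) (g (fst q))) U"
      using ev_hc[OF Z(1)] by blast
  qed
  have evE: "eventually E U" unfolding E_def using US evP by (rule eventually_conj)
  have key: "hc ((Z O W2) O Z) (g z) (g' z)" if Eg: "E g" and Eg': "E g'" for g g' z
  proof -
    have gS: "g \<in> tau_uc closure_of F" and g'S: "g' \<in> tau_uc closure_of F" using Eg Eg' unfolding E_def by auto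
    have gm: "g \<in> mcont" and g'm: "g' \<in> mcont" using gS g'S closure_sub_mcont by blast+
    obtain f where f: "f \<in> F" "f \<in> ball_uc g Z" using closure_approx[OF gS Z(1)] by blast
    obtain f' where f': "f' \<in> F" "f' \<in> ball_uc g' Z" using closure_approx[OF g'S Z(1)] by blast
    have fm: "f \<in> mcont" and f'm: "f' \<in> mcont" using f(1) f'(1) Fm by blast+
    have hgf: "\<And>z. hc Z (g z) (f z)" using ball_hc[OF gm f(2)] .
    have hgf': "\<And>z. hc Z (g' z) (f' z)" using ball_hc[OF g'm f'(2)] .
    have "\<forall>(x, Wx)\<in>P. (f, f') \<in> pdagger x Wx"
    proof (intro ballI)
      fix q assume q: "q \<in> P"
      obtain x Wx where qx: "q = (x, Wx)" by (cases q)
      have a: "hc Z (f x) (g x)" using hc_sym[OF Z(1) hgf[of x]] .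
      have "hc Z (hlim U x) (g x)" using Eg q qx unfolding E_def by auto
      then have b: "hc Z (g x) (hlim U x)" using hc_sym[OF Z(1)] by blast
      have c: "hc Z (hlim U x) (g' x)" using Eg' q qx unfolding E_def by auto
      have "hc (Z O (Z O Z) O Z) (f x) (f' x)"
        by (rule hc_comp[OF a hc_comp[OF hc_comp[OF b c] hgf'[of x]]])
      moreover have "Z O (Z O Z) O Z \<subseteq> Wx" using Z4 q qx unfolding W'_def by force
      ultimately have "hc Wx (f x) (f' x)" using hc_mono by blast
      then have "(f, f') \<in> pdagger x Wx"
        by (rule pdagger_hc[of f x f', OF mcont_ne[OF fm] mcont_ne[OF f'm], THEN iffD2])
      then show "case q of (x, Wx) \<Rightarrow> (f, f') \<in> pdagger x Wx" using qx by simp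
    qed
    then have "(f, f') \<in> udagger W2" using P(3) f(1) f'(1) by blast
    then have hff: "hc W2 (f z) (f' z)" using udagger_hc[OF fm f'm] by blast
    have "hc (Z O W2) (g z) (f' z)" using hgf[of z] hff by (rule hc_comp)
    moreover have "hc Z (f' z) (g' z)" using hc_sym[OF Z(1) hgf'[of z]] .
    ultimately show ?thesis by (rule hc_comp)
  qed
  show ?thesis
    using evE
  proof (rule eventually_mono)
    fix g assume Eg: "E g"
    have "\<forall>z. hc V (hlim U z) (g z)"
    proof
      fix z
      have "eventually (\<lambda>g'. E g' \<and> hc Z (hlim U z) (g' z)) U"
        using evE ev_hc[OF Z(1)] by (rule eventually_conj)
      then have "\<exists>g'. E g' \<and> hc Z (hlim U z) (g' z)" by (rule ultra_ex[OF UU])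
      then obtain g' where g': "E g'" "hc Z (hlim U z) (g' z)" by blast
      have "hc ((Z O W2) O Z) (g' z) (g z)" using key[OF g'(1) Eg] .
      with g'(2) have "hc (Z O ((Z O W2) O Z)) (hlim U z) (g z)" by (rule hc_comp)
      then show "hc V (hlim U z) (g z)" using hc_mono[OF subV] by blast
    qed
    then show "g \<in> tau_uc closure_of F \<and> (\<forall>z. hc V (hlim U z) (g z))" using Eg unfolding E_def by blast
  qed
qed

lemma ev_unif_pick:
  fixes V :: "('b \<times> 'b) set"
  assumes Fm: "F \<subseteq> mcont" and FEP: "finite_extension F" and V: "entourage V"
  shows "\<exists>g. g \<in> tau_uc closure_of F \<and> (\<forall>z. hc V (hlim U z) (g z))"
  using ev_unif[OF Fm FEP V] by (rule ultra_ex[OF UU])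

lemma hlim_mcont:
  assumes Fm: "F \<subseteq> mcont" and FEP: "finite_extension F"
  shows "hlim U \<in> mcont"
proof -
  have usc: "usc (hlim U)"
    unfolding usc_def
  proof (intro allI impI)
    fix x and O' :: "'b set" assume xO: "open O' \<and> hlim U x \<subseteq> O'"
    obtain W where W: "entourage W" "W `` (hlim U x) \<subseteq> O'"
      using compact_in_open_ent[OF hlim_compact] xO by blast
    obtain W1 where W1: "entourage W1" "W1 O W1 \<subseteq> W" using ent_split[OF W(1)] by blast
    obtain W2 where W2: "entourage W2" "W2 O W2 \<subseteq> W1" using ent_split[OF W1(1)] by blast
    have W222: "W2 O W2 O W2 \<subseteq> W" using sub3(1)[OF W2(1) W2(2) W1(2)] .
    obtain g where g: "g \<in> tau_uc closure_of F" "\<forall>z. hc W2 (hlim U z) (g z)"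
      using ev_unif_pick[OF Fm FEP W2(1)] by blast
    have gm: "g \<in> mcont" using g(1) closure_sub_mcont by blast
    obtain O1 where O1: "open O1" "g x \<subseteq> O1" "O1 \<subseteq> W2 `` (g x)" using ent_interior_set[OF W2(1)] by blast
    have "usc g" using gm unfolding mcont_def by blast
    then obtain U0 where U0: "open U0" "x \<in> U0" "\<forall>u\<in>U0. g u \<subseteq> O1"
      using O1(1,2) unfolding usc_def by blast
    have "\<forall>u\<in>U0. hlim U u \<subseteq> O'"
    proof (intro ballI subsetI)
      fix u y assume u: "u \<in> U0" and y: "y \<in> hlim U u"
      obtain z where z: "z \<in> g u" "(y, z) \<in> W2" using g(2) y unfolding hc_def by blast
      have "z \<in> W2 `` (g x)" using U0(3) u z(1) O1(3) by blast
      then obtain a where a: "a \<in> g x" "(a, z) \<in> W2" by blast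
      obtain b where b: "b \<in> hlim U x" "(b, a) \<in> W2" using g(2) a(1) unfolding hc_def by blast
      have "(z, y) \<in> W2" using ent_sym[OF W2(1) z(2)] .
      have "(b, y) \<in> W2 O W2 O W2" using b(2) a(2) \<open>(z, y) \<in> W2\<close> by (rule chain3)
      then have "(b, y) \<in> W" using W222 by blast
      then show "y \<in> O'" using W(2) b(1) by blast
    qed
    then show "\<exists>U'. open U' \<and> x \<in> U' \<and> (\<forall>u\<in>U'. hlim U u \<subseteq> O')" using U0(1,2) by blast
  qed
  have lsc: "lsc (hlim U)"
    unfolding lsc_def
  proof (intro allI impI)
    fix x and O' :: "'b set" assume xO: "open O' \<and> hlim U x \<inter> O' \<noteq> {}"
    then obtain y where y: "y \<in> hlim U x" "y \<in> O'" by blast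
    obtain W where W: "entourage W" "W `` {y} \<subseteq> O'" using ent_open_nbhd xO y(2) by blast
    obtain W1 where W1: "entourage W1" "W1 O W1 \<subseteq> W" using ent_split[OF W(1)] by blast
    obtain W2 where W2: "entourage W2" "W2 O W2 \<subseteq> W1" using ent_split[OF W1(1)] by blast
    have W222: "W2 O W2 O W2 \<subseteq> W" using sub3(1)[OF W2(1) W2(2) W1(2)] .
    obtain g where g: "g \<in> tau_uc closure_of F" "\<forall>z. hc W2 (hlim U z) (g z)"
      using ev_unif_pick[OF Fm FEP W2(1)] by blast
    have gm: "g \<in> mcont" using g(1) closure_sub_mcont by blast
    obtain z where z: "z \<in> g x" "(y, z) \<in> W2" using g(2) y(1) unfolding hc_def by blast
    obtain Q where Q: "open Q" "z \<in> Q" "Q \<subseteq> W2 `` {z}" using ent_interior[OF W2(1)] by blast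
    have "g x \<inter> Q \<noteq> {}" using z(1) Q(2) by blast
    moreover have "lsc g" using gm unfolding mcont_def by blast
    ultimately obtain U0 where U0: "open U0" "x \<in> U0" "\<forall>u\<in>U0. g u \<inter> Q \<noteq> {}"
      using Q(1) unfolding lsc_def by blast
    have "\<forall>u\<in>U0. hlim U u \<inter> O' \<noteq> {}"
    proof
      fix u assume u: "u \<in> U0"
      then obtain c where c: "c \<in> g u" "c \<in> Q" using U0(3) by blast
      have zc: "(z, c) \<in> W2" using Q(3) c(2) by blast
      obtain d where d: "d \<in> hlim U u" "(d, c) \<in> W2" using g(2) c(1) unfolding hc_def by blast
      have "(c, d) \<in> W2" using ent_sym[OF W2(1) d(2)] .
      have "(y, d) \<in> W2 O W2 O W2" using z(2) zc \<open>(c, d) \<in> W2\<close> by (rule chain3)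
      then have "(y, d) \<in> W" using W222 by blast
      then show "hlim U u \<inter> O' \<noteq> {}" using W(2) d(1) by blast
    qed
    then show "\<exists>U'. open U' \<and> x \<in> U' \<and> (\<forall>u\<in>U'. hlim U u \<inter> O' \<noteq> {})" using U0(1,2) by blast
  qed
  show ?thesis unfolding mcont_def using hlim_ne hlim_compact usc lsc by blast
qed

lemma hlim_in_S:
  assumes Fm: "F \<subseteq> mcont" and FEP: "finite_extension F"
  shows "hlim U \<in> tau_uc closure_of F"
proof (rule in_closure_ofI_uc[OF hlim_mcont[OF Fm FEP]])
  fix V :: "('b \<times> 'b) set" assume V: "entourage V"
  obtain W where W: "entourage W" "W O W \<subseteq> V" using ent_split[OF V] by blast
  obtain g where g: "g \<in> tau_uc closure_of F" "\<forall>z. hc W (hlim U z) (g z)"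
    using ev_unif_pick[OF Fm FEP W(1)] by blast
  have gm: "g \<in> mcont" using g(1) closure_sub_mcont by blast
  obtain f where f: "f \<in> F" "f \<in> ball_uc g W" using closure_approx[OF g(1) W(1)] by blast
  have fm: "f \<in> mcont" using f(1) Fm by blast
  have "\<forall>z. hc V (hlim U z) (f z)"
  proof
    fix z
    have "hc (W O W) (hlim U z) (f z)" using g(2) ball_hc[OF gm f(2)] hc_comp by blast
    then show "hc V (hlim U z) (f z)" using hc_mono[OF W(2)] by blast
  qed
  then have "f \<in> ball_uc (hlim U) V"
    unfolding ball_uc_def using udagger_hc[OF hlim_mcont[OF Fm FEP] fm] fm by blast
  then show "\<exists>f\<in>F. f \<in> ball_uc (hlim U) V" using f(1) by blast
qed

lemma hlim_conv:
  fixes V :: "('b \<times> 'b) set"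
  assumes Fm: "F \<subseteq> mcont" and FEP: "finite_extension F" and V: "entourage V"
  shows "eventually (\<lambda>g. g \<in> ball_uc (hlim U) V) U"
  using ev_unif[OF Fm FEP V]
proof (rule eventually_mono)
  fix g assume g: "g \<in> tau_uc closure_of F \<and> (\<forall>z. hc V (hlim U z) (g z))"
  then have gm: "g \<in> mcont" using closure_sub_mcont by blast
  then show "g \<in> ball_uc (hlim U) V"
    unfolding ball_uc_def using udagger_hc[OF hlim_mcont[OF Fm FEP] gm] g by blast
qed

end

lemma backward:
  fixes F :: "('a::topological_space \<Rightarrow> 'b::uniform_space set) set"
  assumes Fm: "F \<subseteq> mcont" and PR: "pointwise_relcompact F" and FEP: "finite_extension F"
  shows "compactin tau_uc (tau_uc closure_of F)"
  unfolding compactin_def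
proof (intro conjI allI impI)
  define S where "S = tau_uc closure_of F"
  show "tau_uc closure_of F \<subseteq> topspace tau_uc" by (rule closure_of_subset_topspace)
  fix \<U> assume A: "(\<forall>U\<in>\<U>. openin tau_uc U) \<and> tau_uc closure_of F \<subseteq> \<Union>\<U>"
  show "\<exists>\<F>. finite \<F> \<and> \<F> \<subseteq> \<U> \<and> tau_uc closure_of F \<subseteq> \<Union>\<F>"
  proof (rule ccontr)
    assume nf: "\<not> (\<exists>\<F>. finite \<F> \<and> \<F> \<subseteq> \<U> \<and> tau_uc closure_of F \<subseteq> \<Union>\<F>)"
    define B where "B = {\<V>. finite \<V> \<and> \<V> \<subseteq> \<U>}"
    define G where "G = (INF \<V>\<in>B. principal (S - \<Union>\<V>))"
    have evG: "eventually P G \<longleftrightarrow> (\<exists>\<V>\<in>B. eventually P (principal (S - \<Union>\<V>)))" for P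
      unfolding G_def
    proof (rule eventually_INF_base)
      show "B \<noteq> {}" unfolding B_def by blast
      fix a b assume "a \<in> B" "b \<in> B"
      then have "a \<union> b \<in> B" unfolding B_def by blast
      moreover have "principal (S - \<Union>(a \<union> b)) \<le> inf (principal (S - \<Union>a)) (principal (S - \<Union>b))"
        by auto
      ultimately show "\<exists>x\<in>B. principal (S - \<Union>x) \<le> inf (principal (S - \<Union>a)) (principal (S - \<Union>b))"
        by blast
    qed
    have "G \<noteq> bot"
    proof
      assume "G = bot"
      then have "eventually (\<lambda>_. False) G" by simp
      then obtain \<V> where "\<V> \<in> B" "eventually (\<lambda>_. False) (principal (S - \<Union>\<V>))" using evG by blast
      then have "finite \<V>" "\<V> \<subseteq> \<U>" "S \<subseteq> \<Union>\<V>" unfolding B_def eventually_principal by auto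
      then show False using nf unfolding S_def by blast
    qed
    then obtain U where U: "U \<le> G" "ultra U" using ultra_exists by blast
    have "{} \<in> B" unfolding B_def by blast
    then have "eventually (\<lambda>g. g \<in> S) G" unfolding evG by (auto simp: eventually_principal)
    then have US: "eventually (\<lambda>g. g \<in> tau_uc closure_of F) U" using filter_leD[OF U(1)] unfolding S_def by blast
    have hS: "hlim U \<in> tau_uc closure_of F" using hlim_in_S[OF PR U(2) US Fm FEP] .
    then obtain O' where O': "O' \<in> \<U>" "hlim U \<in> O'" using A by blast
    then have "uc_open O'" using A unfolding openin_tau by blast
    then obtain V where V: "entourage V" "ball_uc (hlim U) V \<subseteq> O'"
      using O'(2) unfolding uc_open_def ball_uc_def by blast
    have ev1: "eventually (\<lambda>g. g \<in> O') U"
      using hlim_conv[OF PR U(2) US Fm FEP V(1)] by (rule eventually_mono) (use V(2) in blast)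
    have "{O'} \<in> B" unfolding B_def using O'(1) by blast
    then have "eventually (\<lambda>g. g \<notin> O') G" unfolding evG by (auto simp: eventually_principal)
    then have ev2: "eventually (\<lambda>g. g \<notin> O') U" using filter_leD[OF U(1)] by blast
    have "\<exists>g. g \<in> O' \<and> g \<notin> O'" using eventually_conj[OF ev1 ev2] by (rule ultra_ex[OF U(2)])
    then show False by blast
  qed
qed


theorem theorem3p2:
  fixes F :: "('a::topological_space \<Rightarrow> 'b::{uniform_space, t2_space} set) set"
  assumes "locally_compact_space (euclidean :: 'a topology)"
    and "F \<subseteq> mcont"
  shows "compactin tau_uc (tau_uc closure_of F) \<longleftrightarrow>
    ((pointwise_relcompact F \<and> equicontinuous F) \<and> finite_extension F)"
proof
  assume c: "compactin tau_uc (tau_uc closure_of F)"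
  show "(pointwise_relcompact F \<and> equicontinuous F) \<and> finite_extension F"
    using forward_pointwise[OF assms(2) c] forward_equi[OF assms(2) c] forward_fep[OF assms(2) c] by blast
next
  assume "(pointwise_relcompact F \<and> equicontinuous F) \<and> finite_extension F"
  then show "compactin tau_uc (tau_uc closure_of F)"
    using backward[OF assms(2)] by blast
qed

end
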